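(* Let $\boldsymbol{H}$ be a self-adjoint operator on $L^{2}(\mathbb{Z}_{p})$ defined on the dense subspace $\mathcal{D}(\mathbb{Z}_{p})$, with associated unitary group $e^{-i\boldsymbol{H}t}$, $t\in\mathbb{R}$. Let $\mathcal{N}\subset\mathbb{Z}_{p}$ have Haar measure zero and let $\{\mathcal{K}_{j}\}_{j\in\mathbb{J}}$ ($\mathbb{J}$ countable) be pairwise disjoint open compact subsets of $\mathbb{Z}_p$ with $\mathbb{Z}_{p}\smallsetminus\mathcal{N}=\bigsqcup_{j\in\mathbb{J}}\mathcal{K}_{j}$. Put $e_{v}=c_{v}1_{\mathcal{K}_{v}}$ with $c_v>0$ chosen so that $\|e_v\|_2=1$, and $\pi_{r,v}(t)=|\langle e_{r},e^{-i\boldsymbol{H}t}e_{v}\rangle|^{2}$ for $r,v\in\mathbb{J}$, $t\geq 0$. Assume (H1) $\mathcal{H}_{\mathbb{J}}:=\mathrm{Span}\{e_j;\ j\in\mathbb{J}\}$ is a Hilbert subspace of $L^{2}(\mathbb{Z}_{p})$, and (H2) $e^{-i\boldsymbol{H}t}\mathcal{H}_{\mathbb{J}}\subset\mathcal{H}_{\mathbb{J}}$ for $t\ge 0$. Then $\sum_{r\in\mathbb{J}}\pi_{r,v}(t)=1$ for all $t\geq0$ and every $v\in\mathbb{J}$.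
   Context: $p$ is a fixed prime, $\mathbb{Z}_p$ the $p$-adic integers with Haar measure $dx$ normalized by $\int_{\mathbb{Z}_p}dx=1$, $1_A$ the characteristic function of $A$, and $\langle f,g\rangle=\int_{\mathbb{Z}_p}f\overline{g}\,dx$. $\mathcal{D}(\mathbb{Z}_p)$ is the space of locally constant complex functions supported in $\mathbb{Z}_p$. *)

theory Defs
  imports "HOL-Probability.Probability"
begin

text \<open>Model of Z_p: a p-adic integer is identified with its digit sequence
  (x = sum x_i p^i), i.e. a function nat => nat with all values < p.
  The normalized Haar measure is the product of the uniform probability
  measures on the digits, and the p-adic topology is the product of the
  discrete topologies on the digits.\<close>

type_synonym zp = "nat \<Rightarrow> nat"

definition zp_haar :: "nat \<Rightarrow> zp measure" where
  "zp_haar p = PiM UNIV (\<lambda>_::nat. uniform_count_measure {..<p})"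

definition zp_top :: "nat \<Rightarrow> zp topology" where
  "zp_top p = product_topology (\<lambda>_::nat. discrete_topology {..<p}) UNIV"

text \<open>Square integrable complex functions on Z_p (representatives of L^2 classes).\<close>
definition L2 :: "nat \<Rightarrow> (zp \<Rightarrow> complex) set" where
  "L2 p = {f. f \<in> borel_measurable (zp_haar p)
              \<and> integrable (zp_haar p) (\<lambda>x. (cmod (f x))\<^sup>2)}"

definition zp_inner :: "nat \<Rightarrow> (zp \<Rightarrow> complex) \<Rightarrow> (zp \<Rightarrow> complex) \<Rightarrow> complex" where
  "zp_inner p f g = (LINT x|zp_haar p. f x * cnj (g x))"

definition zp_norm :: "nat \<Rightarrow> (zp \<Rightarrow> complex) \<Rightarrow> real" where
  "zp_norm p f = sqrt (LINT x|zp_haar p. (cmod (f x))\<^sup>2)"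

definition ae_eq :: "nat \<Rightarrow> (zp \<Rightarrow> complex) \<Rightarrow> (zp \<Rightarrow> complex) \<Rightarrow> bool" where
  "ae_eq p f g \<longleftrightarrow> (AE x in zp_haar p. f x = g x)"

text \<open>D(Z_p): locally constant complex functions on Z_p.\<close>
definition loc_const :: "nat \<Rightarrow> (zp \<Rightarrow> complex) set" where
  "loc_const p = {f. \<forall>x\<in>topspace (zp_top p). \<exists>V. openin (zp_top p) V \<and> x \<in> V
                      \<and> (\<forall>y\<in>V. f y = f x)}"

definition unitary_group :: "nat \<Rightarrow> (real \<Rightarrow> (zp \<Rightarrow> complex) \<Rightarrow> (zp \<Rightarrow> complex)) \<Rightarrow> bool" where
  "unitary_group p U \<longleftrightarrow>
     (\<forall>t. \<forall>f\<in>L2 p. U t f \<in> L2 p) \<and>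
     (\<forall>t. \<forall>f\<in>L2 p. \<forall>g\<in>L2 p. ae_eq p f g \<longrightarrow> ae_eq p (U t f) (U t g)) \<and>
     (\<forall>f\<in>L2 p. ae_eq p (U 0 f) f) \<and>
     (\<forall>s t. \<forall>f\<in>L2 p. ae_eq p (U (s + t) f) (U s (U t f))) \<and>
     (\<forall>t. \<forall>f\<in>L2 p. \<forall>g\<in>L2 p. zp_inner p (U t f) (U t g) = zp_inner p f g) \<and>
     (\<forall>f\<in>L2 p. ((\<lambda>t. zp_norm p (\<lambda>x. U t f x - f x)) \<longlongrightarrow> 0) (at 0))"

definition self_adjoint :: "nat \<Rightarrow> (zp \<Rightarrow> complex) set \<Rightarrow> ((zp \<Rightarrow> complex) \<Rightarrow> (zp \<Rightarrow> complex)) \<Rightarrow> bool" where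
  "self_adjoint p Dom H \<longleftrightarrow>
     Dom \<subseteq> L2 p \<and> (\<forall>f\<in>Dom. H f \<in> L2 p) \<and>
     (\<forall>f\<in>Dom. \<forall>g\<in>Dom. ae_eq p f g \<longrightarrow> ae_eq p (H f) (H g)) \<and>
     (\<forall>f\<in>L2 p. (\<exists>g\<in>Dom. ae_eq p f g) \<longrightarrow> f \<in> Dom) \<and>
     (\<forall>f\<in>L2 p. \<forall>\<epsilon>>0. \<exists>g\<in>Dom. zp_norm p (\<lambda>x. f x - g x) < \<epsilon>) \<and>
     (\<forall>f\<in>Dom. \<forall>g\<in>Dom. zp_inner p (H f) g = zp_inner p f (H g)) \<and>
     (\<forall>g\<in>L2 p. (\<exists>h\<in>L2 p. \<forall>f\<in>Dom. zp_inner p (H f) g = zp_inner p f h)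
                 \<longrightarrow> g \<in> Dom)"

text \<open>U t = exp(-i H t): H is (i times) the infinitesimal generator of U,
  i.e. Dom is exactly the set of f for which (U t f - f)/t converges in L^2
  as t \<rightarrow> 0, and the limit is -i H f.\<close>
definition generated_by :: "nat \<Rightarrow> (real \<Rightarrow> (zp \<Rightarrow> complex) \<Rightarrow> (zp \<Rightarrow> complex))
     \<Rightarrow> (zp \<Rightarrow> complex) set \<Rightarrow> ((zp \<Rightarrow> complex) \<Rightarrow> (zp \<Rightarrow> complex)) \<Rightarrow> bool" where
  "generated_by p U Dom H \<longleftrightarrow>
     (\<forall>f\<in>L2 p. f \<in> Dom \<longleftrightarrow>
        (\<exists>g\<in>L2 p. ((\<lambda>t. zp_norm p (\<lambda>x. (U t f x - f x) / complex_of_real t - g x)) \<longlongrightarrow> 0) (at 0))) \<and>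
     (\<forall>f\<in>Dom. ((\<lambda>t. zp_norm p (\<lambda>x. (U t f x - f x) / complex_of_real t + \<i> * H f x)) \<longlongrightarrow> 0) (at 0))"

definition basis_fun :: "nat \<Rightarrow> ('j \<Rightarrow> zp set) \<Rightarrow> 'j \<Rightarrow> zp \<Rightarrow> complex" where
  "basis_fun p K v = (\<lambda>x. complex_of_real
      ((1 / sqrt (measure (zp_haar p) (K v))) * indicator (K v) x))"

text \<open>H_J: the Hilbert subspace spanned by the e_j, i.e. the L^2-closure of
  the finite linear combinations of the e_j.\<close>
definition fin_span :: "nat \<Rightarrow> ('j \<Rightarrow> zp set) \<Rightarrow> 'j set \<Rightarrow> (zp \<Rightarrow> complex) set" where
  "fin_span p K J = {f. \<exists>F a. finite F \<and> F \<subseteq> J \<and>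
       f = (\<lambda>x. \<Sum>j\<in>F. a j * basis_fun p K j x)}"

definition hilbert_span :: "nat \<Rightarrow> ('j \<Rightarrow> zp set) \<Rightarrow> 'j set \<Rightarrow> (zp \<Rightarrow> complex) set" where
  "hilbert_span p K J = {f \<in> L2 p. \<forall>\<epsilon>>0. \<exists>g\<in>fin_span p K J.
       zp_norm p (\<lambda>x. f x - g x) < \<epsilon>}"

definition trans_prob :: "nat \<Rightarrow> ('j \<Rightarrow> zp set) \<Rightarrow> (real \<Rightarrow> (zp \<Rightarrow> complex) \<Rightarrow> (zp \<Rightarrow> complex))
     \<Rightarrow> 'j \<Rightarrow> 'j \<Rightarrow> real \<Rightarrow> real" where
  "trans_prob p K U r v t = (cmod (zp_inner p (basis_fun p K r) (U t (basis_fun p K v))))\<^sup>2"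

end

theory Submission
  imports Defs
begin

lemma zp_prob: "p > 0 \<Longrightarrow> prob_space (zp_haar p)"
  unfolding zp_haar_def
  by (intro prob_space_PiM prob_space_uniform_count_measure) auto

lemma space_zp: "space (zp_haar p) = topspace (zp_top p)"
  unfolding zp_haar_def zp_top_def by (simp add: space_PiM space_uniform_count_measure)

definition cyl :: "nat \<Rightarrow> nat \<Rightarrow> zp \<Rightarrow> zp set" where
  "cyl p n x = prod_emb UNIV (\<lambda>_. uniform_count_measure {..<p}) {..<n} (PiE {..<n} (\<lambda>i. {x i}))"

lemma cyl_iff: "y \<in> cyl p n x \<longleftrightarrow> y \<in> topspace (zp_top p) \<and> (\<forall>i<n. y i = x i)"
  unfolding cyl_def prod_emb_def zp_top_def
  by (auto simp: PiE_iff restrict_def space_PiM space_uniform_count_measure extensional_def)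

lemma cyl_sets: "x \<in> topspace (zp_top p) \<Longrightarrow> cyl p n x \<in> sets (zp_haar p)"
  unfolding cyl_def zp_haar_def
  by (rule sets_PiM_I) (auto simp: sets_uniform_count_measure zp_top_def)

lemma cyl_pos: assumes "p > 0" "x \<in> topspace (zp_top p)" shows "emeasure (zp_haar p) (cyl p n x) \<noteq> 0"
proof -
  have "emeasure (zp_haar p) (cyl p n x) = (\<Prod>i\<in>{..<n}. emeasure (uniform_count_measure {..<p}) {x i})"
    unfolding cyl_def zp_haar_def
    by (rule emeasure_PiM_emb) (use assms in \<open>auto simp: sets_uniform_count_measure zp_top_def intro: prob_space_uniform_count_measure\<close>)
  also have "\<dots> \<noteq> 0"
  proof -
    have "emeasure (uniform_count_measure {..<p}) {x i} = ennreal (1 / real p)" if "i < n" for i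
      using assms by (subst emeasure_uniform_count_measure) (auto simp: zp_top_def PiE_iff ennreal_of_nat_eq_real_of_nat divide_ennreal)
    then have "(\<Prod>i\<in>{..<n}. emeasure (uniform_count_measure {..<p}) {x i}) = (\<Prod>i\<in>{..<n}. ennreal (1 / real p))"
      by (intro prod.cong) auto
    also have "\<dots> = ennreal ((1 / real p) ^ n)" by (simp add: prod_ennreal ennreal_power)
    also have "\<dots> \<noteq> 0" using assms by simp
    finally show ?thesis .
  qed
  finally show ?thesis .
qed

lemma open_cyl:
  assumes "openin (zp_top p) K" "x \<in> K"
  shows "\<exists>n. cyl p n x \<subseteq> K"
proof -
  obtain U where U: "finite {i. U i \<noteq> {..<p}}" "x \<in> PiE UNIV U" "PiE UNIV U \<subseteq> K"
    using assms unfolding zp_top_def openin_product_topology_alt by auto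
  obtain n where n: "{i. U i \<noteq> {..<p}} \<subseteq> {..<n}" using finite_nat_bounded[OF U(1)] by blast
  have "cyl p n x \<subseteq> PiE UNIV U"
  proof
    fix y assume y: "y \<in> cyl p n x"
    then have "y \<in> topspace (zp_top p)" "\<forall>i<n. y i = x i" by (auto simp: cyl_iff)
    show "y \<in> PiE UNIV U" unfolding PiE_iff
    proof (intro conjI ballI)
      fix i :: nat
      show "y i \<in> U i"
      proof (cases "i < n")
        case True then show ?thesis using U(2) \<open>\<forall>i<n. y i = x i\<close> by (auto simp: PiE_iff)
      next
        case False then have "U i = {..<p}" using n by auto
        then show ?thesis using \<open>y \<in> topspace (zp_top p)\<close> by (auto simp: zp_top_def PiE_iff)
      qed
    qed auto
  qed
  then show ?thesis using U(3) by blast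
qed

definition cylL :: "nat \<Rightarrow> nat \<Rightarrow> nat list \<Rightarrow> zp set" where
  "cylL p n l = {y \<in> topspace (zp_top p). map y [0..<n] = l}"

lemma cyl_cylL: "cyl p n x = cylL p n (map x [0..<n])"
  by (auto simp: cyl_iff cylL_def)

lemma open_sets:
  assumes "openin (zp_top p) K"
  shows "K \<in> sets (zp_haar p)"
proof -
  let ?F = "{cyl p n x | n x. x \<in> K \<and> cyl p n x \<subseteq> K}"
  have Ksub: "K \<subseteq> topspace (zp_top p)" using assms openin_subset by blast
  have "K = \<Union>?F"
  proof
    show "K \<subseteq> \<Union>?F"
    proof
      fix x assume "x \<in> K"
      then obtain n where "cyl p n x \<subseteq> K" using open_cyl[OF assms] by blast
      moreover have "x \<in> cyl p n x" using \<open>x \<in> K\<close> Ksub by (auto simp: cyl_iff)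
      ultimately show "x \<in> \<Union>?F" using \<open>x \<in> K\<close> by blast
    qed
  qed auto
  moreover have "countable ?F"
  proof (rule countable_subset)
    show "?F \<subseteq> (\<lambda>(n, l). cylL p n l) ` UNIV"
    proof
      fix S assume "S \<in> ?F"
      then obtain n x where "S = cyl p n x" by blast
      then show "S \<in> (\<lambda>(n, l). cylL p n l) ` UNIV"
        by (intro image_eqI[where x="(n, map x [0..<n])"]) (auto simp: cyl_cylL)
    qed
  qed simp
  moreover have "?F \<subseteq> sets (zp_haar p)" using Ksub by (auto intro: cyl_sets)
  ultimately show ?thesis using sets.countable_Union[of ?F "zp_haar p"] by simp
qed

lemma open_pos:
  assumes "p > 0" "openin (zp_top p) K" "K \<noteq> {}"
  shows "measure (zp_haar p) K > 0"
proof -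
  interpret prob_space "zp_haar p" using zp_prob assms by blast
  obtain x where x: "x \<in> K" using assms by blast
  then obtain n where n: "cyl p n x \<subseteq> K" using open_cyl assms by blast
  have xt: "x \<in> topspace (zp_top p)" using x assms(2) openin_subset by blast
  have "0 < emeasure (zp_haar p) (cyl p n x)" using cyl_pos[OF assms(1) xt] by (simp add: zero_less_iff_neq_zero)
  also have "\<dots> \<le> emeasure (zp_haar p) K" using n open_sets[OF assms(2)] by (intro emeasure_mono) auto
  finally show ?thesis by (simp add: emeasure_eq_measure)
qed

lemma cmod_diff_sq: "(cmod (a - b))\<^sup>2 = (cmod a)\<^sup>2 - 2 * Re (a * cnj b) + (cmod b)\<^sup>2"
  unfolding cmod_power2 by (simp add: algebra_simps power2_eq_square)

lemma le_one_plus_sq: "(r::real) \<le> 1 + r\<^sup>2"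
proof (cases "r \<le> 1")
  case True then show ?thesis using zero_le_power2[of r] by linarith
next
  case False then have "r * 1 \<le> r * r" by (intro mult_left_mono) auto
  then show ?thesis by (simp add: power2_eq_square)
qed

context
  fixes p :: nat and J :: "'j set" and K :: "'j \<Rightarrow> zp set"
  assumes pp: "p > 0"
    and Ks: "\<And>j. j \<in> J \<Longrightarrow> K j \<in> sets (zp_haar p)"
    and Kpos: "\<And>j. j \<in> J \<Longrightarrow> measure (zp_haar p) (K j) > 0"
    and Kdis: "disjoint_family_on K J"
begin

interpretation P: prob_space "zp_haar p" using zp_prob[OF pp] .

definition ee :: "'j \<Rightarrow> zp \<Rightarrow> real" where
  "ee j x = (1 / sqrt (measure (zp_haar p) (K j))) * indicator (K j) x"

lemma bf_ee: "basis_fun p K j x = complex_of_real (ee j x)"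
  by (simp add: basis_fun_def ee_def)

lemma ee_meas: "j \<in> J \<Longrightarrow> ee j \<in> borel_measurable (zp_haar p)"
  unfolding ee_def using Ks by measurable

lemma ee_bound: "\<bar>ee j x\<bar> \<le> 1 / sqrt (measure (zp_haar p) (K j))"
  by (simp add: ee_def indicator_def)

lemma ee_sq: "j \<in> J \<Longrightarrow> (ee j x)\<^sup>2 = (1 / measure (zp_haar p) (K j)) * indicator (K j) x"
  using Kpos[of j] by (simp add: ee_def indicator_def power_divide)

lemma ee_sq_int: "j \<in> J \<Longrightarrow> integrable (zp_haar p) (\<lambda>x. (ee j x)\<^sup>2)"
  using Ks[of j] by (simp add: ee_sq) (auto intro!: integrable_divide_zero integrable_real_indicator simp: P.emeasure_eq_measure)

lemma ee_sq_integral: "j \<in> J \<Longrightarrow> (LINT x|zp_haar p. (ee j x)\<^sup>2) = 1"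
  using Kpos[of j] Ks[of j] by (simp add: ee_sq)


lemma L2_int: "f \<in> L2 p \<Longrightarrow> integrable (zp_haar p) f"
proof -
  assume f: "f \<in> L2 p"
  show ?thesis
  proof (rule Bochner_Integration.integrable_bound)
    show "integrable (zp_haar p) (\<lambda>x. 1 + (cmod (f x))\<^sup>2)"
      using f unfolding L2_def by auto
    show "f \<in> borel_measurable (zp_haar p)" using f unfolding L2_def by auto
    show "AE x in zp_haar p. norm (f x) \<le> norm (1 + (cmod (f x))\<^sup>2)"
    proof (intro AE_I2)
      fix x
      have "cmod (f x) \<le> 1 + (cmod (f x))\<^sup>2"
        by (rule le_one_plus_sq)
      then show "norm (f x) \<le> norm (1 + (cmod (f x))\<^sup>2)" by simp
    qed
  qed
qed

lemma L2_mult_ee: "f \<in> L2 p \<Longrightarrow> j \<in> J \<Longrightarrow> integrable (zp_haar p) (\<lambda>x. f x * complex_of_real (ee j x))"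
proof -
  assume f: "f \<in> L2 p" and j: "j \<in> J"
  show ?thesis
  proof (rule Bochner_Integration.integrable_bound)
    show "integrable (zp_haar p) (\<lambda>x. (1 / sqrt (measure (zp_haar p) (K j))) * cmod (f x))"
      using L2_int[OF f] by auto
    show "(\<lambda>x. f x * complex_of_real (ee j x)) \<in> borel_measurable (zp_haar p)"
    proof -
      have [measurable]: "f \<in> borel_measurable (zp_haar p)" using f unfolding L2_def by auto
      have [measurable]: "ee j \<in> borel_measurable (zp_haar p)" using ee_meas[OF j] .
      show ?thesis by measurable
    qed
    show "AE x in zp_haar p. norm (f x * complex_of_real (ee j x)) \<le> norm ((1 / sqrt (measure (zp_haar p) (K j))) * cmod (f x))"
    proof (intro AE_I2)
      fix x
      have "cmod (f x) * \<bar>ee j x\<bar> \<le> cmod (f x) * (1 / sqrt (measure (zp_haar p) (K j)))"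
        by (intro mult_left_mono ee_bound) auto
      then show "norm (f x * complex_of_real (ee j x)) \<le> norm ((1 / sqrt (measure (zp_haar p) (K j))) * cmod (f x))"
        by (simp add: norm_mult mult.commute)
    qed
  qed
qed

lemma lin3:
  fixes A B C :: "zp \<Rightarrow> real"
  assumes "integrable M A" "integrable M B" "integrable M C"
  shows "(LINT x|M. A x - 2 * B x + C x) = integral\<^sup>L M A - 2 * integral\<^sup>L M B + integral\<^sup>L M C"
  using assms by simp

lemma ee_zero: "i \<in> J \<Longrightarrow> j \<in> J \<Longrightarrow> i \<noteq> j \<Longrightarrow> x \<in> K i \<Longrightarrow> ee j x = 0"
  using Kdis unfolding disjoint_family_on_def ee_def by (auto simp: indicator_def)

lemma ee_out: "x \<notin> K j \<Longrightarrow> ee j x = 0"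
  by (simp add: ee_def)

lemma g_sq:
  assumes F: "finite F" "F \<subseteq> J"
  shows "(cmod (\<Sum>j\<in>F. b j * complex_of_real (ee j x)))\<^sup>2 = (\<Sum>j\<in>F. (cmod (b j))\<^sup>2 * (ee j x)\<^sup>2)"
proof (cases "\<exists>i\<in>F. x \<in> K i")
  case True
  then obtain i where i: "i \<in> F" "x \<in> K i" by blast
  have z: "ee j x = 0" if "j \<in> F - {i}" for j
    using ee_zero[of i j x] that i F by auto
  have "(\<Sum>j\<in>F. b j * complex_of_real (ee j x)) = b i * complex_of_real (ee i x)"
    using F(1) i(1) z by (subst sum.remove[of F i]) auto
  moreover have "(\<Sum>j\<in>F. (cmod (b j))\<^sup>2 * (ee j x)\<^sup>2) = (cmod (b i))\<^sup>2 * (ee i x)\<^sup>2"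
    using F(1) i(1) z by (subst sum.remove[of F i]) auto
  ultimately show ?thesis by (simp add: norm_mult power_mult_distrib)
next
  case False
  then have "ee j x = 0" if "j \<in> F" for j using ee_out that by blast
  then show ?thesis by simp
qed

lemma expand:
  assumes f: "f \<in> L2 p" and F: "finite F" "F \<subseteq> J"
  shows "(LINT x|zp_haar p. (cmod (f x - (\<Sum>j\<in>F. b j * basis_fun p K j x)))\<^sup>2)
     = (LINT x|zp_haar p. (cmod (f x))\<^sup>2) - (\<Sum>j\<in>F. (cmod (zp_inner p f (basis_fun p K j)))\<^sup>2)
       + (\<Sum>j\<in>F. (cmod (b j - zp_inner p f (basis_fun p K j)))\<^sup>2)"
proof -
  define g where "g x = (\<Sum>j\<in>F. b j * complex_of_real (ee j x))" for x
  define a where "a j = zp_inner p f (basis_fun p K j)" for j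
  have a_eq: "a j = (LINT x|zp_haar p. f x * complex_of_real (ee j x))" for j
    unfolding a_def zp_inner_def bf_ee by simp
  have gb: "(\<Sum>j\<in>F. b j * basis_fun p K j x) = g x" for x
    unfolding g_def bf_ee ..
  have pw1: "(cmod (f x - g x))\<^sup>2 = (cmod (f x))\<^sup>2 - 2 * Re (f x * cnj (g x)) + (cmod (g x))\<^sup>2" for x
    by (rule cmod_diff_sq)
  have pw2: "f x * cnj (g x) = (\<Sum>j\<in>F. cnj (b j) * (f x * complex_of_real (ee j x)))" for x
    unfolding g_def by (simp add: sum_distrib_left mult_ac)
  have pw3: "(cmod (g x))\<^sup>2 = (\<Sum>j\<in>F. (cmod (b j))\<^sup>2 * (ee j x)\<^sup>2)" for x
    unfolding g_def using g_sq[OF F] .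
  have i0: "integrable (zp_haar p) (\<lambda>x. (cmod (f x))\<^sup>2)" using f unfolding L2_def by auto
  have i1: "integrable (zp_haar p) (\<lambda>x. f x * cnj (g x))"
    unfolding pw2 by (rule Bochner_Integration.integrable_sum) (use F L2_mult_ee[OF f] in auto)
  have I1: "(LINT x|zp_haar p. f x * cnj (g x)) = (\<Sum>j\<in>F. cnj (b j) * a j)"
    unfolding pw2 a_eq using F L2_mult_ee[OF f] by (subst Bochner_Integration.integral_sum) auto
  have i2: "integrable (zp_haar p) (\<lambda>x. Re (f x * cnj (g x)))" using integrable_Re[OF i1] by this
  have I2: "(LINT x|zp_haar p. Re (f x * cnj (g x))) = (\<Sum>j\<in>F. Re (cnj (b j) * a j))"
    by (simp only: integral_Re[OF i1] I1 Re_sum)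
  have i3: "integrable (zp_haar p) (\<lambda>x. (cmod (g x))\<^sup>2)"
    unfolding pw3 by (rule Bochner_Integration.integrable_sum) (use F ee_sq_int in auto)
  have I3: "(LINT x|zp_haar p. (cmod (g x))\<^sup>2) = (\<Sum>j\<in>F. (cmod (b j))\<^sup>2)"
    unfolding pw3 using F ee_sq_int ee_sq_integral by (subst Bochner_Integration.integral_sum) (auto intro!: sum.cong simp: subset_iff)
  have "(LINT x|zp_haar p. (cmod (f x - g x))\<^sup>2)
      = (LINT x|zp_haar p. (cmod (f x))\<^sup>2 - 2 * Re (f x * cnj (g x)) + (cmod (g x))\<^sup>2)"
    unfolding pw1 ..
  also have "\<dots> = (LINT x|zp_haar p. (cmod (f x))\<^sup>2) - 2 * (\<Sum>j\<in>F. Re (cnj (b j) * a j)) + (\<Sum>j\<in>F. (cmod (b j))\<^sup>2)"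
    unfolding lin3[OF i0 i2 i3] I2 I3 ..
  also have "\<dots> = (LINT x|zp_haar p. (cmod (f x))\<^sup>2) - (\<Sum>j\<in>F. (cmod (a j))\<^sup>2) + (\<Sum>j\<in>F. (cmod (b j - a j))\<^sup>2)"
  proof -
    have "(cmod (b j - a j))\<^sup>2 = (cmod (b j))\<^sup>2 - 2 * Re (cnj (b j) * a j) + (cmod (a j))\<^sup>2" for j
      unfolding cmod_power2 by (simp add: algebra_simps power2_eq_square)
    then have "(\<Sum>j\<in>F. (cmod (b j - a j))\<^sup>2) = (\<Sum>j\<in>F. (cmod (b j))\<^sup>2) - 2 * (\<Sum>j\<in>F. Re (cnj (b j) * a j)) + (\<Sum>j\<in>F. (cmod (a j))\<^sup>2)"
      by (simp add: sum.distrib sum_subtractf sum_distrib_left)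
    then show ?thesis by simp
  qed
  finally show ?thesis unfolding gb a_def .
qed

lemma bf_L2: "v \<in> J \<Longrightarrow> basis_fun p K v \<in> L2 p"
proof -
  assume v: "v \<in> J"
  have [measurable]: "ee v \<in> borel_measurable (zp_haar p)" using ee_meas[OF v] .
  have "(\<lambda>x. complex_of_real (ee v x)) \<in> borel_measurable (zp_haar p)" by measurable
  moreover have "integrable (zp_haar p) (\<lambda>x. (cmod (complex_of_real (ee v x)))\<^sup>2)"
    using ee_sq_int[OF v] by simp
  ultimately show ?thesis unfolding L2_def bf_ee by simp
qed

lemma bf_fin_span: "v \<in> J \<Longrightarrow> basis_fun p K v \<in> fin_span p K J"
  unfolding fin_span_def
  by (rule CollectI, rule exI[where x="{v}"], rule exI[where x="\<lambda>_. 1"]) auto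

lemma bf_hspan: "v \<in> J \<Longrightarrow> basis_fun p K v \<in> hilbert_span p K J"
  unfolding hilbert_span_def using bf_L2 bf_fin_span
  by (auto intro!: bexI[where x="basis_fun p K v"] simp: zp_norm_def)

lemma bf_norm: "v \<in> J \<Longrightarrow> zp_inner p (basis_fun p K v) (basis_fun p K v) = 1"
proof -
  assume v: "v \<in> J"
  have "zp_inner p (basis_fun p K v) (basis_fun p K v) = (LINT x|zp_haar p. complex_of_real ((ee v x)\<^sup>2))"
    unfolding zp_inner_def bf_ee by (simp add: power2_eq_square)
  also have "\<dots> = 1" using ee_sq_integral[OF v] by (simp del: of_real_power)
  finally show ?thesis .
qed

lemma parseval:
  assumes f: "f \<in> hilbert_span p K J"
  shows "((\<lambda>r. (cmod (zp_inner p f (basis_fun p K r)))\<^sup>2) has_sum (LINT x|zp_haar p. (cmod (f x))\<^sup>2)) J"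
proof -
  define N where "N = (LINT x|zp_haar p. (cmod (f x))\<^sup>2)"
  define s where "s r = (cmod (zp_inner p f (basis_fun p K r)))\<^sup>2" for r
  have fL: "f \<in> L2 p" using f unfolding hilbert_span_def by auto
  have bessel: "sum s Y \<le> N" if "finite Y" "Y \<subseteq> J" for Y
  proof -
    have "0 \<le> (LINT x|zp_haar p. (cmod (f x - (\<Sum>j\<in>Y. zp_inner p f (basis_fun p K j) * basis_fun p K j x)))\<^sup>2)"
      by (rule integral_nonneg_AE) auto
    also have "\<dots> = N - sum s Y"
      unfolding expand[OF fL that] N_def s_def by simp
    finally show ?thesis by simp
  qed
  have "(sum s \<longlongrightarrow> N) (finite_subsets_at_top J)"
  proof (rule tendstoI)
    fix \<epsilon> :: real assume e: "\<epsilon> > 0"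
    have hs: "\<forall>\<delta>>0. \<exists>g\<in>fin_span p K J. zp_norm p (\<lambda>x. f x - g x) < \<delta>"
      using f unfolding hilbert_span_def by blast
    obtain g where g: "g \<in> fin_span p K J" "zp_norm p (\<lambda>x. f x - g x) < sqrt \<epsilon>"
      using hs[rule_format, OF real_sqrt_gt_zero[OF e]] by blast
    then obtain F0 b where F0: "finite F0" "F0 \<subseteq> J" "g = (\<lambda>x. \<Sum>j\<in>F0. b j * basis_fun p K j x)"
      unfolding fin_span_def by auto
    have "(LINT x|zp_haar p. (cmod (f x - g x))\<^sup>2) < \<epsilon>"
      using g(2) unfolding zp_norm_def by simp
    moreover have "(LINT x|zp_haar p. (cmod (f x - g x))\<^sup>2) \<ge> N - sum s F0"
      unfolding F0(3) expand[OF fL F0(1,2)] N_def s_def by (simp add: sum_nonneg)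
    ultimately have F0e: "N - sum s F0 < \<epsilon>" by simp
    show "eventually (\<lambda>Y. dist (sum s Y) N < \<epsilon>) (finite_subsets_at_top J)"
      unfolding eventually_finite_subsets_at_top
    proof (intro exI conjI allI impI)
      fix Y assume Y: "finite Y \<and> F0 \<subseteq> Y \<and> Y \<subseteq> J"
      have "sum s F0 \<le> sum s Y" using Y by (intro sum_mono2) (auto simp: s_def)
      moreover have "sum s Y \<le> N" using Y bessel by auto
      ultimately show "dist (sum s Y) N < \<epsilon>" using F0e by (simp add: dist_real_def)
    qed (use F0 in auto)
  qed
  then show ?thesis unfolding has_sum_def s_def N_def .
qed

end


lemma inner_swap: "zp_inner p g f = cnj (zp_inner p f g)"
proof -
  have "(\<lambda>x. g x * cnj (f x)) = (\<lambda>x. cnj (f x * cnj (g x)))" by (simp add: mult.commute)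
  then show ?thesis unfolding zp_inner_def by (simp only: Bochner_Integration.integral_cnj)
qed

lemma inner_self: "zp_inner p f f = complex_of_real (LINT x|zp_haar p. (cmod (f x))\<^sup>2)"
proof -
  have "(\<lambda>x. f x * cnj (f x)) = (\<lambda>x. complex_of_real ((cmod (f x))\<^sup>2))"
    by (simp only: complex_norm_square)
  then show ?thesis unfolding zp_inner_def by (simp only: integral_complex_of_real)
qed

theorem proposition1:
  fixes p :: nat and Dom :: "(zp \<Rightarrow> complex) set"
    and H :: "(zp \<Rightarrow> complex) \<Rightarrow> (zp \<Rightarrow> complex)"
    and U :: "real \<Rightarrow> (zp \<Rightarrow> complex) \<Rightarrow> (zp \<Rightarrow> complex)"
    and N :: "zp set" and J :: "'j set" and K :: "'j \<Rightarrow> zp set"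
  assumes "prime p"
    and "self_adjoint p Dom H"
    and "loc_const p \<subseteq> Dom"
    and "unitary_group p U"
    and "generated_by p U Dom H"
    and "N \<subseteq> topspace (zp_top p)" and "N \<in> null_sets (zp_haar p)"
    and "countable J"
    and "disjoint_family_on K J"
    and "\<And>j. j \<in> J \<Longrightarrow> openin (zp_top p) (K j) \<and> compactin (zp_top p) (K j) \<and> K j \<noteq> {}"
    and "topspace (zp_top p) - N = (\<Union>j\<in>J. K j)"
    and H2: "\<And>t f. t \<ge> 0 \<Longrightarrow> f \<in> hilbert_span p K J \<Longrightarrow> U t f \<in> hilbert_span p K J"
    and "v \<in> J" and "t \<ge> 0"
  shows "((\<lambda>r. trans_prob p K U r v t) has_sum 1) J"
proof -
  have pp: "p > 0" using assms(1) prime_gt_0_nat by blast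
  have Ks: "K j \<in> sets (zp_haar p)" if "j \<in> J" for j
    using assms(10)[OF that] open_sets by blast
  have Kpos: "measure (zp_haar p) (K j) > 0" if "j \<in> J" for j
    using assms(10)[OF that] open_pos[OF pp] by blast
  note ctx = pp Ks Kpos assms(9)
  define e where "e = basis_fun p K v"
  define f where "f = U t e"
  have eL: "e \<in> L2 p" unfolding e_def by (rule bf_L2[OF ctx assms(13)])
  have eH: "e \<in> hilbert_span p K J" unfolding e_def by (rule bf_hspan[OF ctx assms(13)])
  have fH: "f \<in> hilbert_span p K J" unfolding f_def by (rule H2[OF assms(14) eH])
  have "zp_inner p f f = zp_inner p e e"
    using assms(4) eL unfolding unitary_group_def f_def by blast
  also have "\<dots> = 1" unfolding e_def by (rule bf_norm[OF ctx assms(13)])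
  finally have n1: "(LINT x|zp_haar p. (cmod (f x))\<^sup>2) = 1"
    unfolding inner_self by simp
  have "trans_prob p K U r v t = (cmod (zp_inner p f (basis_fun p K r)))\<^sup>2" for r
    unfolding trans_prob_def f_def e_def by (subst inner_swap) simp
  then show ?thesis using parseval[OF ctx fH] n1 by simp
qed

end
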